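(* Let $\rho$ be a function quasi-norm over a $\sigma$-finite measure space $(\Omega,\Sigma,\mu)$, let $X$ be a quasi-Banach space, and let $(x_n)_{n=1}^\infty$ be a sequence of measurable functions $\Omega\to X$ such that $\lim_n\rho(\|x_n(\cdot)-x(\cdot)\|)=0$ for some measurable $x\colon\Omega\to X$. Then there is a subsequence $(y_n)_{n=1}^\infty$ of $(x_n)_{n=1}^\infty$ with $\lim_ny_n=x$ a.e.
   Context: $L_0^+(\mu)$: measurable functions $\Omega\to[0,\infty]$ modulo a.e. equality; $\Sigma(\mu)=\{E\in\Sigma:\mu(E)<\infty\}$. A function quasi-norm over $(\Omega,\Sigma,\mu)$ is $\rho\colon L_0^+(\mu)\to[0,\infty]$ with (F1) $\rho(tf)=t\rho(f)$ for $t\ge0$; (F2) $f\le g$ a.e. $\Rightarrow\rho(f)\le\rho(g)$; (F3) $\rho(\chi_E)<\infty$ for $E\in\Sigma(\mu)$; (F4) for all $E\in\Sigma(\mu)$, $\varepsilon>0$ there is $\delta>0$ such that $\mu(A)\le\varepsilon$ whenever $A\in\Sigma$, $A\subseteq E$, $\rho(\chi_A)\le\delta$; (F5) there is $\kappa$ with $\rho(f+g)\le\kappa(\rho(f)+\rho(g))$. *)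

theory Defs
  imports "HOL-Analysis.Analysis"
begin

definition quasi_norm :: "('b::real_vector \<Rightarrow> real) \<Rightarrow> bool" where
  "quasi_norm q \<longleftrightarrow>
     (\<forall>x. 0 \<le> q x) \<and> (\<forall>x. q x = 0 \<longleftrightarrow> x = 0) \<and>
     (\<forall>c x. q (c *\<^sub>R x) = \<bar>c\<bar> * q x) \<and>
     (\<exists>C. \<forall>x y. q (x + y) \<le> C * (q x + q y))"

definition quasi_banach :: "('b::real_vector \<Rightarrow> real) \<Rightarrow> bool" where
  "quasi_banach q \<longleftrightarrow> quasi_norm q \<and>
     (\<forall>s::nat \<Rightarrow> 'b. (\<forall>e>0. \<exists>N. \<forall>m\<ge>N. \<forall>n\<ge>N. q (s m - s n) < e) \<longrightarrow>
         (\<exists>l. (\<lambda>n. q (s n - l)) \<longlonglongrightarrow> 0))"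

definition qopen :: "('b::real_vector \<Rightarrow> real) \<Rightarrow> 'b set \<Rightarrow> bool" where
  "qopen q U \<longleftrightarrow> (\<forall>x\<in>U. \<exists>e>0. \<forall>y. q (y - x) < e \<longrightarrow> y \<in> U)"

definition qborel :: "('b::real_vector \<Rightarrow> real) \<Rightarrow> 'b measure" where
  "qborel q = sigma UNIV (Collect (qopen q))"

text \<open>Function quasi-norm (F1)--(F5); rho acts on nonnegative measurable functions,
  axioms are only imposed on measurable functions (elements of L_0^+).\<close>
definition function_quasi_norm :: "'a measure \<Rightarrow> (('a \<Rightarrow> ennreal) \<Rightarrow> ennreal) \<Rightarrow> bool" where
  "function_quasi_norm M \<rho> \<longleftrightarrow>
     (\<forall>f\<in>borel_measurable M. \<forall>t::real. 0 \<le> t \<longrightarrow> \<rho> (\<lambda>\<omega>. ennreal t * f \<omega>) = ennreal t * \<rho> f) \<and>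
     (\<forall>f\<in>borel_measurable M. \<forall>g\<in>borel_measurable M.
        (AE \<omega> in M. f \<omega> \<le> g \<omega>) \<longrightarrow> \<rho> f \<le> \<rho> g) \<and>
     (\<forall>E\<in>sets M. emeasure M E < \<infinity> \<longrightarrow> \<rho> (indicator E) < \<infinity>) \<and>
     (\<forall>E\<in>sets M. emeasure M E < \<infinity> \<longrightarrow> (\<forall>\<epsilon>::real. \<epsilon> > 0 \<longrightarrow> (\<exists>\<delta>::real. \<delta> > 0 \<and>
        (\<forall>A\<in>sets M. A \<subseteq> E \<longrightarrow> \<rho> (indicator A) \<le> ennreal \<delta> \<longrightarrow> emeasure M A \<le> ennreal \<epsilon>)))) \<and>
     (\<exists>\<kappa>::real. \<forall>f\<in>borel_measurable M. \<forall>g\<in>borel_measurable M.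
        \<rho> (\<lambda>\<omega>. f \<omega> + g \<omega>) \<le> ennreal \<kappa> * (\<rho> f + \<rho> g))"

end

theory Submission
  imports Defs
begin

theorem proposition3p13:
  fixes M :: "'a measure" and \<rho> :: "('a \<Rightarrow> ennreal) \<Rightarrow> ennreal"
    and q :: "'b::real_vector \<Rightarrow> real"
    and xs :: "nat \<Rightarrow> 'a \<Rightarrow> 'b" and x :: "'a \<Rightarrow> 'b"
  assumes "sigma_finite_measure M"
    and "function_quasi_norm M \<rho>"
    and "quasi_banach q"
    and "\<forall>n. xs n \<in> M \<rightarrow>\<^sub>M qborel q"
    and "x \<in> M \<rightarrow>\<^sub>M qborel q"
    and "\<forall>n. (\<lambda>\<omega>. ennreal (q (xs n \<omega> - x \<omega>))) \<in> borel_measurable M"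
    and "(\<lambda>n. \<rho> (\<lambda>\<omega>. ennreal (q (xs n \<omega> - x \<omega>)))) \<longlonglongrightarrow> 0"
  shows "\<exists>r. strict_mono r \<and> (AE \<omega> in M. (\<lambda>n. q (xs (r n) \<omega> - x \<omega>)) \<longlonglongrightarrow> 0)"
proof -
  obtain E where E: "range E \<subseteq> sets M" "(\<Union>i. E i) = space M" "\<And>i. emeasure M (E i) \<noteq> \<infinity>" "incseq E"
    using sigma_finite_measure.sigma_finite_incseq[OF assms(1)] by metis
  define f where "f n \<omega> = ennreal (q (xs n \<omega> - x \<omega>))" for n \<omega>
  have fm: "f n \<in> borel_measurable M" for n
    using assms(6) unfolding f_def by auto
  have q0: "q y \<ge> 0" for y
    using assms(3) unfolding quasi_banach_def quasi_norm_def by auto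
  have tend: "(\<lambda>n. \<rho> (f n)) \<longlonglongrightarrow> 0"
    using assms(7) unfolding f_def by simp
  note FQ = assms(2)[unfolded function_quasi_norm_def]
  have F1: "\<rho> (\<lambda>\<omega>. ennreal t * g \<omega>) = ennreal t * \<rho> g" if "g \<in> borel_measurable M" "0 \<le> t" for g t
    using conjunct1[OF FQ] that by blast
  have F2: "\<rho> g \<le> \<rho> h" if "g \<in> borel_measurable M" "h \<in> borel_measurable M" "AE \<omega> in M. g \<omega> \<le> h \<omega>" for g h
    using conjunct1[OF conjunct2[OF FQ]] that by blast
  have F4: "\<exists>\<delta>::real. \<delta> > 0 \<and>
        (\<forall>A\<in>sets M. A \<subseteq> E \<longrightarrow> \<rho> (indicator A) \<le> ennreal \<delta> \<longrightarrow> emeasure M A \<le> ennreal e)"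
    if "E \<in> sets M" "emeasure M E < \<infinity>" "e > 0" for E e
    using conjunct1[OF conjunct2[OF conjunct2[OF conjunct2[OF FQ]]]] that by blast
  define B where "B k n = {\<omega>\<in>space M. ennreal ((1/2)^k) \<le> f n \<omega>} \<inter> E k" for k n
  have Bs: "B k n \<in> sets M" for k n
    using E(1) fm[of n] unfolding B_def by auto
  have key: "\<exists>N. \<forall>n\<ge>N. emeasure M (B k n) \<le> ennreal ((1/2)^k)" for k
  proof -
    define e :: real where "e = (1/2)^k"
    have e0: "e > 0" unfolding e_def by simp
    obtain \<delta> where d0: "\<delta> > 0" and d: "\<forall>A\<in>sets M. A \<subseteq> E k \<longrightarrow> \<rho> (indicator A) \<le> ennreal \<delta> \<longrightarrow> emeasure M A \<le> ennreal e"
      using F4[of "E k" e] E(1,3) e0 by (auto simp: less_top)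
    have "ennreal (e * \<delta>) > 0" using e0 d0 by simp
    then have "eventually (\<lambda>n. \<rho> (f n) < ennreal (e * \<delta>)) sequentially"
      using order_tendstoD(2)[OF tend] by blast
    then obtain N where N: "\<And>n. n \<ge> N \<Longrightarrow> \<rho> (f n) < ennreal (e * \<delta>)"
      unfolding eventually_sequentially by blast
    show ?thesis
    proof (intro exI allI impI)
      fix n assume "n \<ge> N"
      have im: "indicator (B k n) \<in> borel_measurable M" using Bs by simp
      have le: "ennreal e * indicator (B k n) \<omega> \<le> f n \<omega>" for \<omega>
        unfolding B_def e_def by (auto simp: indicator_def)
      have "ennreal e * \<rho> (indicator (B k n)) = \<rho> (\<lambda>\<omega>. ennreal e * indicator (B k n) \<omega>)"
        using F1[OF im, of e] e0 by simp
      also have "\<dots> \<le> \<rho> (f n)"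
      proof (rule F2)
        show "(\<lambda>\<omega>. ennreal e * indicator (B k n) \<omega>) \<in> borel_measurable M" using im by measurable
      qed (use fm le in auto)
      also have "\<dots> < ennreal e * ennreal \<delta>" using N[OF \<open>n \<ge> N\<close>] e0 d0 by (simp add: ennreal_mult)
      finally have lt: "ennreal e * \<rho> (indicator (B k n)) < ennreal e * ennreal \<delta>" .
      have "\<rho> (indicator (B k n)) \<le> ennreal \<delta>"
      proof (rule ccontr)
        assume "\<not> ?thesis"
        then have "ennreal \<delta> \<le> \<rho> (indicator (B k n))" by simp
        then have "ennreal e * ennreal \<delta> \<le> ennreal e * \<rho> (indicator (B k n))"
          by (rule mult_left_mono) simp
        with lt show False by simp
      qed
      moreover have "B k n \<subseteq> E k" unfolding B_def by auto
      ultimately show "emeasure M (B k n) \<le> ennreal ((1/2)^k)"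
        using d Bs unfolding e_def by blast
    qed
  qed
  then obtain N where N: "\<And>k n. n \<ge> N k \<Longrightarrow> emeasure M (B k n) \<le> ennreal ((1/2)^k)"
    by metis
  define r where "r k = (\<Sum>i\<le>k. N i) + k" for k
  have sm: "strict_mono r"
    unfolding strict_mono_Suc_iff r_def by simp
  have rN: "r k \<ge> N k" for k
  proof -
    have "N k \<le> (\<Sum>i\<le>k. N i)" by (rule member_le_sum) auto
    then show ?thesis unfolding r_def by simp
  qed
  define C where "C k = B k (r k)" for k
  have Cs: "C k \<in> sets M" for k unfolding C_def using Bs by simp
  have Cle: "emeasure M (C k) \<le> ennreal ((1/2)^k)" for k
    unfolding C_def using N rN by blast
  have Cfin: "emeasure M (C k) < \<infinity>" for k
    using Cle[of k] by (simp add: le_less_trans)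
  have Cmeas: "measure M (C k) \<le> (1/2)^k" for k
    using Cle[of k] Cfin[of k] unfolding measure_def
    by (simp add: enn2real_leI)
  have "summable (\<lambda>k. measure M (C k))"
    by (rule summable_comparison_test'[where g="\<lambda>k. (1/2)^k"]) (use Cmeas in auto)
  then have ae: "AE \<omega> in M. eventually (\<lambda>k. \<omega> \<in> space M - C k) sequentially"
    by (rule borel_cantelli_AE1[OF Cs Cfin])
  have "AE \<omega> in M. (\<lambda>n. q (xs (r n) \<omega> - x \<omega>)) \<longlonglongrightarrow> 0"
    using ae
  proof (rule AE_mp, intro AE_I2 impI)
    fix \<omega> assume om: "\<omega> \<in> space M" and ev: "eventually (\<lambda>k. \<omega> \<in> space M - C k) sequentially"
    obtain j where j: "\<omega> \<in> E j" using E(2) om by auto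
    have "eventually (\<lambda>k. \<omega> \<in> E k) sequentially"
      unfolding eventually_sequentially using j E(4) by (auto simp: incseq_def)
    with ev have "eventually (\<lambda>k. q (xs (r k) \<omega> - x \<omega>) \<le> (1/2)^k) sequentially"
    proof eventually_elim
      case (elim k)
      then have "\<not> ennreal ((1/2)^k) \<le> f (r k) \<omega>" using om unfolding C_def B_def by auto
      then show ?case unfolding f_def by (meson ennreal_leI linorder_le_cases)
    qed
    moreover have lim: "((\<lambda>k. (1/2::real)^k) \<longlongrightarrow> 0) sequentially"
      by (rule LIMSEQ_power_zero) simp
    moreover have "eventually (\<lambda>k. 0 \<le> q (xs (r k) \<omega> - x \<omega>)) sequentially"
      using q0 by simp
    ultimately show "(\<lambda>n. q (xs (r n) \<omega> - x \<omega>)) \<longlonglongrightarrow> 0"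
      by (intro tendsto_sandwich[OF _ _ tendsto_const lim])
  qed
  with sm show ?thesis by blast
qed

end
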